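(* For every $n,k,d\in\mathbb{N}$ with $n\ge k\ge d$ there exists $\varepsilon_n(k,d)>0$ such that $$| \tilde{c}(k,d)| - \varepsilon_n(k,d) \leq \inf_{g\in \mathscr{P}_{>k}^n} \|f_d-g\|_1 \leq | \tilde{c}(k,d)|,$$ and $\lim_{n\to\infty}\varepsilon_n(k,d)=0$ for fixed $k,d$.
   Context: $f_d(x)=\sum_{S\subseteq\{1,\dots,n\},|S|=d}\prod_{i\in S}x_i$ is the $d$-th elementary symmetric multilinear polynomial on $\{-1,1\}^n$. Every $g:\{-1,1\}^n\to\mathbb{R}$ has a unique expansion $g=\sum_S\widehat g(S)w_S$ with $w_S(x)=\prod_{i\in S}x_i$, and $\mathscr{P}^n_{>k}=\{g:\ \widehat g(S)=0\text{ whenever }|S|\le k\}$. $\|\cdot\|_1$ is the $L_1$ norm with respect to the uniform probability measure on $\{-1,1\}^n$. Let $T_k(x)=\sum_{\ell=0}^k c(k,\ell)x^\ell$ be the $k$-th Chebyshev polynomial of the first kind, $T_k(\cos\theta)=\cos(k\theta)$. Define $\tilde c(k,\ell)=c(k,\ell)$ if $k-\ell$ is even and $\tilde c(k,\ell)=c(k-1,\ell)$ if $k-\ell$ is odd. *)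

theory Defs
  imports Complex_Main "HOL-Library.FuncSet" "HOL-Computational_Algebra.Polynomial"
begin

definition cube :: "nat \<Rightarrow> (nat \<Rightarrow> real) set" where
  "cube n = {0..<n} \<rightarrow>\<^sub>E {-1, 1}"

definition walsh :: "nat set \<Rightarrow> (nat \<Rightarrow> real) \<Rightarrow> real" where
  "walsh S x = (\<Prod>i\<in>S. x i)"

definition elem_sym :: "nat \<Rightarrow> nat \<Rightarrow> (nat \<Rightarrow> real) \<Rightarrow> real" where
  "elem_sym n d x = (\<Sum>S\<in>{S. S \<subseteq> {0..<n} \<and> card S = d}. walsh S x)"

text \<open>P^n_{>k}: functions on the cube whose (unique) Walsh expansion has
  vanishing coefficients for all |S| <= k.\<close>
definition high_deg :: "nat \<Rightarrow> nat \<Rightarrow> ((nat \<Rightarrow> real) \<Rightarrow> real) set" where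
  "high_deg n k = {g. \<exists>c :: nat set \<Rightarrow> real. (\<forall>S. card S \<le> k \<longrightarrow> c S = 0) \<and>
      (\<forall>x\<in>cube n. g x = (\<Sum>S\<in>Pow {0..<n}. c S * walsh S x))}"

definition L1_cube :: "nat \<Rightarrow> ((nat \<Rightarrow> real) \<Rightarrow> real) \<Rightarrow> real" where
  "L1_cube n h = (\<Sum>x\<in>cube n. \<bar>h x\<bar>) / 2 ^ n"

fun cheb :: "nat \<Rightarrow> real poly" where
  "cheb 0 = 1"
| "cheb (Suc 0) = [:0, 1:]"
| "cheb (Suc (Suc k)) = [:0, 2:] * cheb (Suc k) - cheb k"

definition cheb_coeff :: "nat \<Rightarrow> nat \<Rightarrow> real" where
  "cheb_coeff k l = coeff (cheb k) l"

definition cheb_coeff_tilde :: "nat \<Rightarrow> nat \<Rightarrow> real" where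
  "cheb_coeff_tilde k l = (if even (k - l) then cheb_coeff k l else cheb_coeff (k - 1) l)"

end

theory Submission
  imports Defs
begin

lemma sum_cube_prod:
  fixes f :: "nat \<Rightarrow> real \<Rightarrow> real"
  shows   "(\<Sum>x\<in>cube n. \<Prod>i<n. f i (x i)) = (\<Prod>i<n. f i (-1) + f i 1)"
proof -
  have "(\<Prod>i\<in>{0..<n}. \<Sum>y\<in>{-1,1::real}. f i y) = (\<Sum>g\<in>PiE {0..<n} (\<lambda>_. {-1,1}). \<Prod>i\<in>{0..<n}. f i (g i))"
    using prod_sum_PiE[of "{0..<n}" "\<lambda>_. {-1,1::real}" f] by simp
  then show ?thesis by (simp add: cube_def lessThan_atLeast0)
qed

lemma cube_val: "x \<in> cube n \<Longrightarrow> i < n \<Longrightarrow> x i = -1 \<or> x i = 1"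
  by (auto simp: cube_def PiE_def Pi_def)

lemma walsh_cube: "S \<subseteq> {..<n} \<Longrightarrow> walsh S x = (\<Prod>i<n. if i \<in> S then x i else 1)"
  unfolding walsh_def by (simp add: prod.If_cases Int_absorb1 Int_absorb2 Int_commute)

lemma walsh_orth:
  assumes "S \<subseteq> {..<n}" "T \<subseteq> {..<n}"
  shows "(\<Sum>x\<in>cube n. walsh S x * walsh T x) = (if S = T then 2 ^ n else 0)"
proof -
  define f where "f i a = (if i \<in> S then a else 1) * (if i \<in> T then a else (1::real))" for i a
  have "(\<Sum>x\<in>cube n. walsh S x * walsh T x) = (\<Sum>x\<in>cube n. \<Prod>i<n. f i (x i))"
    using assms by (simp add: walsh_cube f_def prod.distrib)
  also have "\<dots> = (\<Prod>i<n. f i (-1) + f i 1)" by (rule sum_cube_prod)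
  also have "\<dots> = (if S = T then 2 ^ n else 0)"
  proof (cases "S = T")
    case True
    then have "\<And>i. f i (-1) + f i 1 = 2" by (simp add: f_def)
    then show ?thesis using True by simp
  next
    case False
    then obtain i where "i \<in> S \<and> i \<notin> T \<or> i \<in> T \<and> i \<notin> S" by blast
    then have i: "i < n" "f i (-1) + f i 1 = 0" using assms by (auto simp: f_def)
    then show ?thesis using False by (auto intro!: prod_zero)
  qed
  finally show ?thesis .
qed

lemma walsh_sum: "S \<subseteq> {..<n} \<Longrightarrow> (\<Sum>x\<in>cube n. walsh S x) = (if S = {} then 2 ^ n else 0)"
  using walsh_orth[of S n "{}"] by (simp add: walsh_def)

lemma walsh_sum0: "S \<subseteq> {0..<n} \<Longrightarrow> (\<Sum>x\<in>cube n. walsh S x) = (if S = {} then 2 ^ n else 0)"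
  using walsh_sum[of S n] by (simp add: atLeast0LessThan)


definition Pj :: "nat \<Rightarrow> nat \<Rightarrow> nat set set" where
  "Pj n j = {S. S \<subseteq> {0..<n} \<and> card S = j}"

lemma finite_Pj[simp]: "finite (Pj n j)"
  unfolding Pj_def by (rule finite_subset[of _ "Pow {0..<n}"]) auto

lemma elem_sym_Pj: "elem_sym n j x = (\<Sum>S\<in>Pj n j. walsh S x)"
  by (simp add: elem_sym_def Pj_def)

lemma double_count:
  "(\<Sum>S\<in>Pj n j. \<Sum>i\<in>{0..<n}-S. F (insert i S) i S) =
   (\<Sum>U\<in>Pj n (Suc j). \<Sum>i\<in>U. F U i (U - {i}))"
proof -
  have fin: "\<forall>S\<in>Pj n j. finite ({0..<n}-S)" by auto
  have fin2: "\<forall>U\<in>Pj n (Suc j). finite U" by (auto simp: Pj_def intro: finite_subset)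
  have "(\<Sum>S\<in>Pj n j. \<Sum>i\<in>{0..<n}-S. F (insert i S) i S) =
        (\<Sum>(S,i)\<in>(SIGMA S:Pj n j. {0..<n}-S). F (insert i S) i S)"
    by (rule sum.Sigma[OF finite_Pj fin])
  also have "\<dots> = (\<Sum>(U,i)\<in>(SIGMA U:Pj n (Suc j). U). F U i (U - {i}))"
  proof (rule sum.reindex_bij_witness[where i="\<lambda>(U,i). (U - {i}, i)" and j="\<lambda>(S,i). (insert i S, i)"])
    fix a assume "a \<in> (SIGMA S:Pj n j. {0..<n}-S)"
    then obtain S i where a: "a = (S,i)" "S \<subseteq> {0..<n}" "card S = j" "i < n" "i \<notin> S"
      by (auto simp: Pj_def)
    have "finite S" using a(2) finite_subset by blast
    then show "(\<lambda>(U,i). (U - {i}, i)) ((\<lambda>(S,i). (insert i S, i)) a) = a"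
      "(\<lambda>(S,i). (insert i S, i)) a \<in> (SIGMA U:Pj n (Suc j). U)"
      "(case (\<lambda>(S,i). (insert i S, i)) a of (U,i) \<Rightarrow> F U i (U - {i})) = (case a of (S,i) \<Rightarrow> F (insert i S) i S)"
      using a by (auto simp: Pj_def)
  next
    fix b assume "b \<in> (SIGMA U:Pj n (Suc j). U)"
    then obtain U i where b: "b = (U,i)" "U \<subseteq> {0..<n}" "card U = Suc j" "i \<in> U"
      by (auto simp: Pj_def)
    have "finite U" using b(2) finite_subset by blast
    then show "(\<lambda>(S,i). (insert i S, i)) ((\<lambda>(U,i). (U - {i}, i)) b) = b"
      "(\<lambda>(U,i). (U - {i}, i)) b \<in> (SIGMA S:Pj n j. {0..<n}-S)"
      using b by (auto simp: Pj_def insert_absorb)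
  qed
  also have "\<dots> = (\<Sum>U\<in>Pj n (Suc j). \<Sum>i\<in>U. F U i (U - {i}))"
    by (rule sum.Sigma[OF finite_Pj fin2, symmetric])
  finally show ?thesis .
qed

lemma x_walsh_in:
  assumes "x \<in> cube n" "i \<in> S" "S \<subseteq> {0..<n}"
  shows "x i * walsh S x = walsh (S - {i}) x"
proof -
  have "finite S" using assms(3) finite_subset by blast
  then have "walsh S x = x i * walsh (S - {i}) x"
    unfolding walsh_def using assms(2) by (simp add: prod.remove)
  moreover have "i < n" using assms by auto
  then have "x i * x i = 1" using cube_val[OF assms(1), of i] by auto
  ultimately show ?thesis by (metis mult.assoc mult_1)
qed

lemma x_walsh_out:
  assumes "i \<notin> S" "S \<subseteq> {0..<n}"
  shows "x i * walsh S x = walsh (insert i S) x"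
proof -
  have "finite S" using assms(2) finite_subset by blast
  then show ?thesis unfolding walsh_def using assms by simp
qed

lemma sum_x_walsh:
  assumes "x \<in> cube n" "S \<subseteq> {0..<n}"
  shows "(\<Sum>i<n. x i) * walsh S x = (\<Sum>i\<in>S. walsh (S - {i}) x) + (\<Sum>i\<in>{0..<n}-S. walsh (insert i S) x)"
proof -
  have "(\<Sum>i<n. x i) * walsh S x = (\<Sum>i\<in>{0..<n}. x i * walsh S x)"
    by (simp add: sum_distrib_right lessThan_atLeast0)
  also have "\<dots> = (\<Sum>i\<in>{0..<n}-S. x i * walsh S x) + (\<Sum>i\<in>S. x i * walsh S x)"
    by (rule sum.subset_diff[OF assms(2)]) simp
  also have "\<dots> = (\<Sum>i\<in>S. walsh (S - {i}) x) + (\<Sum>i\<in>{0..<n}-S. walsh (insert i S) x)"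
    using assms by (simp add: x_walsh_in x_walsh_out)
  finally show ?thesis .
qed

lemma card_diff_Pj: "S \<in> Pj n j \<Longrightarrow> card ({0..<n} - S) = n - j"
  by (auto simp: Pj_def card_Diff_subset finite_subset)

lemma card_Pj: "U \<in> Pj n j \<Longrightarrow> card U = j"
  by (auto simp: Pj_def)

lemma es_rec_part2:
  "(\<Sum>S\<in>Pj n j. \<Sum>i\<in>{0..<n}-S. walsh (insert i S) x) = real (Suc j) * elem_sym n (Suc j) x"
proof -
  have "(\<Sum>S\<in>Pj n j. \<Sum>i\<in>{0..<n}-S. walsh (insert i S) x) = (\<Sum>U\<in>Pj n (Suc j). \<Sum>i\<in>U. walsh U x)"
    using double_count[where F="\<lambda>U i S. walsh U x"] by simp
  also have "\<dots> = (\<Sum>U\<in>Pj n (Suc j). real (Suc j) * walsh U x)"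
    by (rule sum.cong) (auto simp: card_Pj)
  finally show ?thesis by (simp add: elem_sym_Pj sum_distrib_left)
qed

lemma es_rec_part1:
  "(\<Sum>U\<in>Pj n (Suc j). \<Sum>i\<in>U. walsh (U - {i}) x) = real (n - j) * elem_sym n j x"
proof -
  have "(\<Sum>U\<in>Pj n (Suc j). \<Sum>i\<in>U. walsh (U - {i}) x) = (\<Sum>S\<in>Pj n j. \<Sum>i\<in>{0..<n}-S. walsh S x)"
    using double_count[where F="\<lambda>U i S. walsh S x", symmetric] by simp
  also have "\<dots> = (\<Sum>S\<in>Pj n j. real (n - j) * walsh S x)"
    by (rule sum.cong) (auto simp: card_diff_Pj)
  finally show ?thesis by (simp add: elem_sym_Pj sum_distrib_left)
qed

lemma es_rec_0:
  assumes "x \<in> cube n"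
  shows "(\<Sum>i<n. x i) * elem_sym n 0 x = elem_sym n 1 x"
proof -
  have "Pj n 0 = {{}}" by (auto simp: Pj_def finite_subset)
  then have "(\<Sum>i<n. x i) * elem_sym n 0 x = (\<Sum>S\<in>Pj n 0. \<Sum>i\<in>{0..<n}-S. walsh (insert i S) x)"
    using sum_x_walsh[OF assms, of "{}"] by (simp add: elem_sym_Pj)
  then show ?thesis using es_rec_part2[where n=n and j=0 and x=x] by simp
qed

lemma es_rec_Suc:
  assumes "x \<in> cube n"
  shows "(\<Sum>i<n. x i) * elem_sym n (Suc j) x =
     real (Suc (Suc j)) * elem_sym n (Suc (Suc j)) x + real (n - j) * elem_sym n j x"
proof -
  have "(\<Sum>i<n. x i) * elem_sym n (Suc j) x = (\<Sum>S\<in>Pj n (Suc j). (\<Sum>i<n. x i) * walsh S x)"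
    by (simp add: elem_sym_Pj sum_distrib_left)
  also have "\<dots> = (\<Sum>S\<in>Pj n (Suc j). (\<Sum>i\<in>S. walsh (S - {i}) x) + (\<Sum>i\<in>{0..<n}-S. walsh (insert i S) x))"
    by (rule sum.cong) (auto simp: Pj_def intro!: sum_x_walsh[OF assms])
  also have "\<dots> = real (n - j) * elem_sym n j x + real (Suc (Suc j)) * elem_sym n (Suc (Suc j)) x"
    by (simp add: sum.distrib es_rec_part1 es_rec_part2)
  finally show ?thesis by simp
qed


definition ybar :: "nat \<Rightarrow> (nat \<Rightarrow> real) \<Rightarrow> real" where
  "ybar n x = (\<Sum>i<n. x i) / real n"

fun Rm :: "nat \<Rightarrow> nat \<Rightarrow> nat \<Rightarrow> real" where
  "Rm n 0 j = (if j = 0 then 1 else 0)"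
| "Rm n (Suc m) 0 = Rm n m 1 / real n"
| "Rm n (Suc m) (Suc j) = (real (Suc (Suc j)) * Rm n m (Suc (Suc j)) + real (n - j) * Rm n m j) / real n"

lemma sum_elem_sym: "(\<Sum>x\<in>cube n. elem_sym n j x) = (if j = 0 then 2 ^ n else 0)"
proof -
  have "(\<Sum>x\<in>cube n. elem_sym n j x) = (\<Sum>S\<in>Pj n j. \<Sum>x\<in>cube n. walsh S x)"
    by (simp add: elem_sym_Pj sum.swap[of _ "cube n"])
  also have "\<dots> = (\<Sum>S\<in>Pj n j. if S = {} then 2 ^ n else 0)"
    by (rule sum.cong) (simp_all add: Pj_def walsh_sum0)
  also have "\<dots> = (if j = 0 then 2 ^ n else 0)"
  proof (cases "j = 0")
    case True
    then have "Pj n j = {{}}" by (auto simp: Pj_def finite_subset)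
    then show ?thesis using True by simp
  next
    case False
    then have "\<forall>S\<in>Pj n j. S \<noteq> {}" by (auto simp: Pj_def)
    then show ?thesis using False by simp
  qed
  finally show ?thesis .
qed

lemma moments:
  assumes "n > 0"
  shows "(\<Sum>x\<in>cube n. elem_sym n j x * ybar n x ^ m) = 2 ^ n * Rm n m j"
proof (induction m arbitrary: j)
  case 0
  then show ?case by (simp add: sum_elem_sym)
next
  case (Suc m)
  show ?case
  proof (cases j)
    case 0
    have "(\<Sum>x\<in>cube n. elem_sym n j x * ybar n x ^ Suc m) = (\<Sum>x\<in>cube n. elem_sym n 1 x * ybar n x ^ m / real n)"
    proof (rule sum.cong)
      fix x assume x: "x \<in> cube n"
      have "elem_sym n j x * ybar n x ^ Suc m = ((\<Sum>i<n. x i) * elem_sym n 0 x) * ybar n x ^ m / real n"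
        by (simp add: 0 ybar_def)
      also have "\<dots> = elem_sym n 1 x * ybar n x ^ m / real n" by (simp only: es_rec_0[OF x])
      finally show "elem_sym n j x * ybar n x ^ Suc m = elem_sym n 1 x * ybar n x ^ m / real n" .
    qed simp
    also have "\<dots> = (\<Sum>x\<in>cube n. elem_sym n 1 x * ybar n x ^ m) / real n"
      by (simp add: sum_divide_distrib)
    finally show ?thesis using Suc.IH[of 1] 0 by simp
  next
    case (Suc j')
    have "(\<Sum>x\<in>cube n. elem_sym n j x * ybar n x ^ Suc m) =
      (\<Sum>x\<in>cube n. (real (Suc (Suc j')) * (elem_sym n (Suc (Suc j')) x * ybar n x ^ m) + real (n - j') * (elem_sym n j' x * ybar n x ^ m)) / real n)"
    proof (rule sum.cong)
      fix x assume x: "x \<in> cube n"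
      have "elem_sym n j x * ybar n x ^ Suc m = ((\<Sum>i<n. x i) * elem_sym n (Suc j') x) * ybar n x ^ m / real n"
        by (simp add: Suc ybar_def)
      also have "\<dots> = (real (Suc (Suc j')) * (elem_sym n (Suc (Suc j')) x * ybar n x ^ m) + real (n - j') * (elem_sym n j' x * ybar n x ^ m)) / real n"
        by (simp only: es_rec_Suc[OF x]) (simp add: algebra_simps)
      finally show "elem_sym n j x * ybar n x ^ Suc m = \<dots>" .
    qed simp
    also have "\<dots> = (real (Suc (Suc j')) * (\<Sum>x\<in>cube n. elem_sym n (Suc (Suc j')) x * ybar n x ^ m) + real (n - j') * (\<Sum>x\<in>cube n. elem_sym n j' x * ybar n x ^ m)) / real n"
      by (simp add: sum_divide_distrib[symmetric] sum.distrib sum_distrib_left)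
    also have "\<dots> = (real (Suc (Suc j')) * (2 ^ n * Rm n m (Suc (Suc j'))) + real (n - j') * (2 ^ n * Rm n m j')) / real n"
      by (simp only: Suc.IH)
    also have "\<dots> = 2 ^ n * Rm n (Suc m) j"
      unfolding Suc Rm.simps by (simp add: distrib_left mult.left_commute)
    finally show ?thesis .
  qed
qed


lemma ratio_lim: "(\<lambda>n. real (n - j) / real n) \<longlonglongrightarrow> 1"
proof -
  have "(\<lambda>n. 1 - real j * (1 / real n)) \<longlonglongrightarrow> 1 - real j * 0"
    by (intro tendsto_intros)
  moreover have "eventually (\<lambda>n. 1 - real j * (1 / real n) = real (n - j) / real n) sequentially"
    using eventually_ge_at_top[of "Suc j"]
  proof eventually_elim
    case (elim n)
    then have "real (n - j) = real n - real j" by (simp add: of_nat_diff)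
    moreover have "real n > 0" using elim by simp
    ultimately show ?case by (simp add: diff_divide_distrib)
  qed
  ultimately have "(\<lambda>n. real (n - j) / real n) \<longlonglongrightarrow> 1 - real j * 0"
    using tendsto_cong by fastforce
  then show ?thesis by simp
qed

lemma Rm_lim: "(\<lambda>n. Rm n m j) \<longlonglongrightarrow> (if m = j then 1 else 0)"
proof (induction m arbitrary: j)
  case 0
  then show ?case by simp
next
  case (Suc m)
  show ?case
  proof (cases j)
    case 0
    have "(\<lambda>n. Rm n m 1 * (1 / real n)) \<longlonglongrightarrow> (if m = 1 then 1 else 0) * 0"
      by (rule tendsto_mult[OF Suc.IH lim_1_over_n])
    then show ?thesis using 0 by simp
  next
    case (Suc j')
    have "(\<lambda>n. real (Suc (Suc j')) * Rm n m (Suc (Suc j')) * (1 / real n) + (real (n - j') / real n) * Rm n m j')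
      \<longlonglongrightarrow> real (Suc (Suc j')) * (if m = Suc (Suc j') then 1 else 0) * 0 + 1 * (if m = j' then 1 else 0)"
      by (rule tendsto_add[OF tendsto_mult[OF tendsto_mult[OF tendsto_const Suc.IH] lim_1_over_n] tendsto_mult[OF ratio_lim Suc.IH]])
    then show ?thesis using Suc by (simp add: add_divide_distrib)
  qed
qed


definition orth :: "nat \<Rightarrow> nat \<Rightarrow> ((nat \<Rightarrow> real) \<Rightarrow> real) \<Rightarrow> bool" where
  "orth n k h = (\<forall>S. S \<subseteq> {0..<n} \<longrightarrow> k < card S \<longrightarrow> (\<Sum>x\<in>cube n. walsh S x * h x) = 0)"

lemma orth_const: "orth n k (\<lambda>_. c)"
  unfolding orth_def
proof (intro allI impI)
  fix S assume "S \<subseteq> {0..<n}" "k < card S"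
  then have "S \<noteq> {}" "S \<subseteq> {..<n}" by auto
  then show "(\<Sum>x\<in>cube n. walsh S x * c) = 0"
    using walsh_sum[of S n] by (simp add: sum_distrib_right[symmetric])
qed

lemma orth_mono: "orth n k h \<Longrightarrow> k \<le> k' \<Longrightarrow> orth n k' h"
  unfolding orth_def by auto

lemma orth_sum:
  assumes fI: "finite I" and hI0: "\<And>i. i \<in> I \<Longrightarrow> orth n k (h i)"
  shows "orth n k (\<lambda>x. \<Sum>i\<in>I. h i x)"
  unfolding orth_def
proof (intro allI impI)
  fix S assume S: "S \<subseteq> {0..<n}" "k < card S"
  note hI = hI0[unfolded orth_def]
  have "(\<Sum>x\<in>cube n. walsh S x * (\<Sum>i\<in>I. h i x)) = (\<Sum>i\<in>I. \<Sum>x\<in>cube n. walsh S x * h i x)"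
    by (simp add: sum_distrib_left sum.swap[of _ "cube n"])
  also have "\<dots> = 0" using hI S by (intro sum.neutral) blast
  finally show "(\<Sum>x\<in>cube n. walsh S x * (\<Sum>i\<in>I. h i x)) = 0" .
qed

lemma orth_cmult: "orth n k h \<Longrightarrow> orth n k (\<lambda>x. c * h x)"
  unfolding orth_def by (auto simp: sum_distrib_left[symmetric] mult.left_commute)

lemma orth_xmul:
  assumes "i < n" "orth n k h"
  shows "orth n (Suc k) (\<lambda>x. x i * h x)"
  unfolding orth_def
proof (intro allI impI)
  fix S assume S: "S \<subseteq> {0..<n}" "Suc k < card S"
  define S' where "S' = (if i \<in> S then S - {i} else insert i S)"
  have finS: "finite S" using S finite_subset by blast
  have S': "S' \<subseteq> {0..<n}" "k < card S'"
    using S assms(1) finS by (auto simp: S'_def)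
  have "(\<Sum>x\<in>cube n. walsh S x * (x i * h x)) = (\<Sum>x\<in>cube n. walsh S' x * h x)"
  proof (rule sum.cong)
    fix x assume x: "x \<in> cube n"
    have "x i * walsh S x = walsh S' x"
      using x_walsh_in[OF x _ S(1)] x_walsh_out[OF _ S(1)] by (auto simp: S'_def)
    then show "walsh S x * (x i * h x) = walsh S' x * h x" by (metis mult.assoc mult.commute)
  qed simp
  also have "\<dots> = 0" using assms(2) S' unfolding orth_def by blast
  finally show "(\<Sum>x\<in>cube n. walsh S x * (x i * h x)) = 0" .
qed

lemma orth_ymul:
  assumes "orth n k h"
  shows "orth n (Suc k) (\<lambda>x. ybar n x * h x)"
proof -
  have "orth n (Suc k) (\<lambda>x. (1 / real n) * (\<Sum>i<n. x i * h x))"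
    by (intro orth_cmult orth_sum orth_xmul assms) auto
  then show ?thesis by (simp add: ybar_def sum_distrib_right)
qed

lemma orth_ypow: "orth n m (\<lambda>x. ybar n x ^ m)"
proof (induction m)
  case 0 then show ?case using orth_const[of n 0 1] by simp
next
  case (Suc m) then show ?case using orth_ymul[OF Suc] by simp
qed

lemma weak_dual:
  assumes g: "g \<in> high_deg n k" and h: "orth n k h" and hb: "\<forall>x\<in>cube n. \<bar>h x\<bar> \<le> 1"
  shows "(\<Sum>x\<in>cube n. elem_sym n d x * h x) / 2 ^ n \<le> L1_cube n (\<lambda>x. elem_sym n d x - g x)"
proof -
  obtain c where c: "\<forall>S. card S \<le> k \<longrightarrow> c S = 0"
    "\<forall>x\<in>cube n. g x = (\<Sum>S\<in>Pow {0..<n}. c S * walsh S x)"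
    using g unfolding high_deg_def by blast
  have "(\<Sum>x\<in>cube n. g x * h x) = (\<Sum>x\<in>cube n. \<Sum>S\<in>Pow {0..<n}. c S * (walsh S x * h x))"
    by (rule sum.cong) (auto simp: c(2) sum_distrib_right mult.assoc)
  also have "\<dots> = (\<Sum>S\<in>Pow {0..<n}. c S * (\<Sum>x\<in>cube n. walsh S x * h x))"
    by (simp add: sum.swap[of _ "cube n"] sum_distrib_left)
  also have "\<dots> = 0"
  proof (rule sum.neutral, rule ballI)
    fix S assume "S \<in> Pow {0..<n}"
    then show "c S * (\<Sum>x\<in>cube n. walsh S x * h x) = 0"
      using c(1) h unfolding orth_def by (cases "card S \<le> k") auto
  qed
  finally have g0: "(\<Sum>x\<in>cube n. g x * h x) = 0" .
  have "(\<Sum>x\<in>cube n. elem_sym n d x * h x) = (\<Sum>x\<in>cube n. (elem_sym n d x - g x) * h x)"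
    using g0 by (simp add: left_diff_distrib sum_subtractf)
  also have "\<dots> \<le> (\<Sum>x\<in>cube n. \<bar>elem_sym n d x - g x\<bar>)"
  proof (rule sum_mono)
    fix x assume "x \<in> cube n"
    then have "\<bar>h x\<bar> \<le> 1" using hb by blast
    then have "\<bar>(elem_sym n d x - g x) * h x\<bar> \<le> \<bar>elem_sym n d x - g x\<bar>"
      by (simp add: abs_mult mult_left_le)
    then show "(elem_sym n d x - g x) * h x \<le> \<bar>elem_sym n d x - g x\<bar>" by linarith
  qed
  finally show ?thesis unfolding L1_cube_def by (simp add: divide_right_mono)
qed


lemma cheb_cos: "poly (cheb k) (cos x) = cos (real k * x)"
proof (induction k rule: cheb.induct)
  case 1 then show ?case by simp
next
  case 2 then show ?case by simp
next
  case (3 k)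
  have "cos (real (Suc (Suc k)) * x) = 2 * cos x * cos (real (Suc k) * x) - cos (real k * x)"
    using cos_times_cos[of x "real (Suc k) * x"]
    by (simp add: algebra_simps)
  then show ?case using 3 by simp
qed

lemma cheb_bound:
  assumes "\<bar>t\<bar> \<le> 1"
  shows "\<bar>poly (cheb k) t\<bar> \<le> 1"
proof -
  have "t = cos (arccos t)" using assms by simp
  then have "poly (cheb k) t = cos (real k * arccos t)" by (metis cheb_cos)
  then show ?thesis by simp
qed

lemma coeff_cheb_SS:
  "coeff (cheb (Suc (Suc k))) m = (case m of 0 \<Rightarrow> 0 | Suc m' \<Rightarrow> 2 * coeff (cheb (Suc k)) m') - coeff (cheb k) m"
proof -
  have "[:0, 2:] * cheb (Suc k) = pCons 0 (smult 2 (cheb (Suc k)))"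
    by simp
  then show ?thesis by (simp add: coeff_pCons split: nat.split)
qed

lemma cheb_coeff_props: "(k < m \<longrightarrow> coeff (cheb k) m = 0) \<and> (odd (k + m) \<longrightarrow> coeff (cheb k) m = 0)"
proof (induction k arbitrary: m rule: cheb.induct)
  case 1 then show ?case by (cases m) auto
next
  case 2 then show ?case by (cases m) (auto simp: coeff_pCons split: nat.split)
next
  case (3 k)
  show ?case
  proof (cases m)
    case 0 then show ?thesis using "3.IH"(2)[of 0] by (simp add: coeff_cheb_SS)
  next
    case (Suc m')
    then show ?thesis using "3.IH"(1)[of m'] "3.IH"(2)[of m] by (auto simp add: coeff_cheb_SS)
  qed
qed

lemma cheb_coeff_high: "k < m \<Longrightarrow> coeff (cheb k) m = 0"
  using cheb_coeff_props by blast

lemma cheb_coeff_parity: "odd (k + m) \<Longrightarrow> coeff (cheb k) m = 0"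
  using cheb_coeff_props by blast

lemma degree_cheb: "degree (cheb k) \<le> k"
  by (meson cheb_coeff_high degree_le leI)

lemma poly_cheb_sum: "poly (cheb k) t = (\<Sum>m\<le>k. cheb_coeff k m * t ^ m)"
proof -
  have "poly (cheb k) t = (\<Sum>m\<le>degree (cheb k). coeff (cheb k) m * t ^ m)" by (rule poly_altdef)
  also have "\<dots> = (\<Sum>m\<le>k. coeff (cheb k) m * t ^ m)"
    by (rule sum.mono_neutral_left) (auto simp: degree_cheb coeff_eq_0)
  finally show ?thesis by (simp add: cheb_coeff_def)
qed


lemma coeff_lin_mult:
  fixes a :: real and Q :: "real poly"
  shows   "coeff ([:-a, 1:] * Q) e = -a * coeff Q e + (case e of 0 \<Rightarrow> 0 | Suc e' \<Rightarrow> coeff Q e')"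
  by (simp add: coeff_pCons split: nat.split)

lemma prod_linear_sign:
  fixes a :: "nat \<Rightarrow> real"
  assumes "finite I" "\<forall>i\<in>I. a i \<ge> 0"
  shows "\<forall>e. (-1) ^ (card I - e) * coeff (\<Prod>i\<in>I. [:-a i, 1:]) e \<ge> 0 \<and>
             (card I < e \<longrightarrow> coeff (\<Prod>i\<in>I. [:-a i, 1:]) e = 0)"
  using assms
proof (induction I rule: finite_induct)
  case empty
  then show ?case by (auto simp: coeff_1)
next
  case (insert x F)
  define Q where "Q = (\<Prod>i\<in>F. [:-a i, 1:])"
  define N where "N = card F"
  have IH: "\<And>e. (-1) ^ (N - e) * coeff Q e \<ge> 0" "\<And>e. N < e \<Longrightarrow> coeff Q e = 0"
    using insert by (auto simp: Q_def N_def)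
  have ax: "a x \<ge> 0" using insert by auto
  have P: "(\<Prod>i\<in>insert x F. [:-a i, 1:]) = [:-a x, 1:] * Q"
    using insert by (simp add: Q_def)
  have cd: "card (insert x F) = Suc N" using insert by (simp add: N_def)
  show ?case
  proof (intro allI conjI impI)
    fix e
    show "(-1) ^ (card (insert x F) - e) * coeff (\<Prod>i\<in>insert x F. [:-a i, 1:]) e \<ge> 0"
    proof (cases e)
      case 0
      have "(-1) ^ (Suc N - 0) * (-a x * coeff Q 0) = a x * ((-1) ^ (N - 0) * coeff Q 0)"
        by simp
      also have "\<dots> \<ge> 0" using ax IH(1)[of 0] by simp
      finally show ?thesis using 0 by (simp add: P cd coeff_lin_mult)
    next
      case (Suc e')
      have eq: "(-1) ^ (Suc N - Suc e') * coeff ([:-a x, 1:] * Q) (Suc e') =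
            (-1) ^ (N - e') * coeff Q e' + a x * (- ((-1) ^ (N - e')) * coeff Q (Suc e'))"
        by (simp only: coeff_lin_mult nat.case diff_Suc_Suc) (simp add: algebra_simps)
      have t2: "a x * (- ((-1) ^ (N - e')) * coeff Q (Suc e')) \<ge> 0"
      proof (cases "e' < N")
        case True
        then have "- ((-1::real) ^ (N - e')) = (-1) ^ (N - Suc e')"
        proof -
          have "N - e' = Suc (N - Suc e')" using True by simp
          then show ?thesis by simp
        qed
        then show ?thesis using ax IH(1)[of "Suc e'"] by simp
      next
        case False
        then show ?thesis using IH(2)[of "Suc e'"] by simp
      qed
      show ?thesis unfolding Suc P cd eq using IH(1)[of e'] t2 by linarith
    qed
  next
    fix e assume "card (insert x F) < e"
    then obtain e' where e': "e = Suc e'" "N < e'" using cd by (cases e) auto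
    then show "coeff (\<Prod>i\<in>insert x F. [:-a i, 1:]) e = 0"
      using IH(2)[of e'] IH(2)[of "Suc e'"] by (simp add: P coeff_lin_mult)
  qed
qed


definition PL :: "nat \<Rightarrow> (nat \<Rightarrow> real) \<Rightarrow> nat \<Rightarrow> real poly" where
  "PL M u j = (\<Prod>i\<in>{..M}-{j}. [:-u i, 1:])"

definition DL :: "nat \<Rightarrow> (nat \<Rightarrow> real) \<Rightarrow> nat \<Rightarrow> real" where
  "DL M u j = (\<Prod>i\<in>{..M}-{j}. u j - u i)"

definition LL :: "nat \<Rightarrow> (nat \<Rightarrow> real) \<Rightarrow> nat \<Rightarrow> real poly" where
  "LL M u j = smult (1 / DL M u j) (PL M u j)"

locale nodes =
  fixes M :: nat and u :: "nat \<Rightarrow> real"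
  assumes dec: "\<And>i j. i < j \<Longrightarrow> j \<le> M \<Longrightarrow> u j < u i"
    and nonneg: "\<And>j. j \<le> M \<Longrightarrow> u j \<ge> 0"
begin

lemma inj: "inj_on u {..M}"
proof (rule inj_onI)
  fix i j assume "i \<in> {..M}" "j \<in> {..M}" "u i = u j"
  then show "i = j" using dec[of i j] dec[of j i] by (cases i j rule: linorder_cases) auto
qed

lemma DL_sign: "j \<le> M \<Longrightarrow> (-1) ^ j * DL M u j > 0"
proof -
  assume j: "j \<le> M"
  have split: "{..M}-{j} = {..<j} \<union> {j<..M}" using j by auto
  have "DL M u j = (\<Prod>i\<in>{..<j}. u j - u i) * (\<Prod>i\<in>{j<..M}. u j - u i)"
    unfolding DL_def split by (rule prod.union_disjoint) auto
  also have "(\<Prod>i\<in>{..<j}. u j - u i) = (-1) ^ j * (\<Prod>i\<in>{..<j}. u i - u j)"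
    using prod_uminus[of "\<lambda>i. u i - u j" "{..<j}"] by simp
  finally have "(-1) ^ j * DL M u j = (\<Prod>i\<in>{..<j}. u i - u j) * (\<Prod>i\<in>{j<..M}. u j - u i)"
    by (simp add: mult.assoc[symmetric] power_mult_distrib[symmetric])
  also have "\<dots> > 0"
    using j by (intro mult_pos_pos prod_pos) (auto intro: dec)
  finally show ?thesis .
qed

lemma DL_nz: "j \<le> M \<Longrightarrow> DL M u j \<noteq> 0"
  using DL_sign by fastforce

lemma poly_PL: "i \<le> M \<Longrightarrow> j \<le> M \<Longrightarrow> poly (PL M u j) (u i) = (if i = j then DL M u j else 0)"
proof (cases "i = j")
  case True then show ?thesis by (simp add: PL_def DL_def poly_prod)
next
  case False
  assume "i \<le> M" "j \<le> M"
  then have "i \<in> {..M}-{j}" using False by auto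
  then have "(\<Prod>l\<in>{..M}-{j}. u i - u l) = 0" by (intro prod_zero) auto
  then show ?thesis using False by (simp add: PL_def DL_def poly_prod)
qed

lemma poly_LL: "i \<le> M \<Longrightarrow> j \<le> M \<Longrightarrow> poly (LL M u j) (u i) = (if i = j then 1 else 0)"
  using DL_nz[of j] by (simp add: LL_def poly_PL)

lemma degree_PL: assumes "j \<le> M" shows "degree (PL M u j) \<le> M"
proof -
  have "degree (PL M u j) \<le> sum (degree \<circ> (\<lambda>i. [:-u i, 1:])) ({..M}-{j})"
    unfolding PL_def by (rule degree_prod_sum_le) simp
  also have "\<dots> = card ({..M}-{j})" by simp
  also have "\<dots> \<le> M" using \<open>j \<le> M\<close> by simp
  finally show ?thesis .
qed

lemma interp:
  assumes "degree R \<le> M"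
  shows "R = (\<Sum>j\<le>M. smult (poly R (u j)) (LL M u j))"
proof (rule poly_eqI_degree[where A="u ` {..M}"])
  fix x assume "x \<in> u ` {..M}"
  then obtain i where i: "i \<le> M" "x = u i" by auto
  have "poly (\<Sum>j\<le>M. smult (poly R (u j)) (LL M u j)) x = (\<Sum>j\<le>M. poly R (u j) * (if i = j then 1 else 0))"
    using i by (simp add: poly_sum poly_LL)
  also have "\<dots> = poly R x" using i by (simp add: if_distrib cong: if_cong)
  finally show "poly R x = poly (\<Sum>j\<le>M. smult (poly R (u j)) (LL M u j)) x" by simp
next
  have c: "card (u ` {..M}) = Suc M" using inj by (simp add: card_image)
  then show "degree R < card (u ` {..M})" using assms by simp
  have "degree (\<Sum>j\<le>M. smult (poly R (u j)) (LL M u j)) \<le> M"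
    by (intro degree_sum_le) (auto simp: LL_def intro!: order.trans[OF degree_smult_le] order.trans[OF degree_smult_le degree_PL] degree_PL)
  then show "degree (\<Sum>j\<le>M. smult (poly R (u j)) (LL M u j)) < card (u ` {..M})" using c by simp
qed

lemma interp_coeff:
  assumes "degree R \<le> M"
  shows "coeff R e = (\<Sum>j\<le>M. poly R (u j) * coeff (LL M u j) e)"
  by (subst interp[OF assms]) (simp add: coeff_sum)

lemma LL_sign:
  assumes "j \<le> M"
  shows "(-1) ^ (M - e) * ((-1) ^ j * coeff (LL M u j) e) \<ge> 0"
proof -
  have cardj: "card ({..M}-{j}) = M" using assms by simp
  have s: "(-1) ^ (M - e) * coeff (PL M u j) e \<ge> 0"
    using prod_linear_sign[of "{..M}-{j}" u] nonneg cardj unfolding PL_def by auto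
  have p: "(-1) ^ j / DL M u j > 0"
    using DL_sign[OF assms] by (simp add: zero_less_divide_iff zero_less_mult_iff)
  have "(-1) ^ (M - e) * ((-1) ^ j * coeff (LL M u j) e) = ((-1) ^ (M - e) * coeff (PL M u j) e) * ((-1) ^ j / DL M u j)"
    by (simp add: LL_def)
  also have "\<dots> \<ge> 0" using s p by (rule mult_nonneg_nonneg[OF _ less_imp_le])
  finally show ?thesis .
qed

end


definition eta :: "nat \<Rightarrow> nat \<Rightarrow> real" where
  "eta K j = cos (real j * pi / real K)"

lemma angle_le:
  assumes "2 * j \<le> K"
  shows "real j * pi / real K \<le> pi / 2" "0 \<le> real j * pi / real K"
proof -
  show "0 \<le> real j * pi / real K" by simp
  show "real j * pi / real K \<le> pi / 2"
  proof (cases "K = 0")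
    case True then show ?thesis by simp
  next
    case False
    have "2 * real j * pi \<le> real K * pi"
      using assms by (intro mult_right_mono) (auto simp: of_nat_mult[symmetric] simp del: of_nat_mult)
    then show ?thesis using False by (simp add: field_simps)
  qed
qed

lemma angle_lt:
  assumes "2 * j < K"
  shows "real j * pi / real K < pi / 2"
proof -
  have K: "K > 0" using assms by simp
  have "2 * real j * pi < real K * pi"
    using assms by (intro mult_strict_right_mono) (auto simp: of_nat_mult[symmetric] simp del: of_nat_mult)
  then show ?thesis using K by (simp add: field_simps)
qed

lemma eta_nonneg: assumes "2 * j \<le> K" shows "eta K j \<ge> 0"
proof -
  have "0 \<le> real j * pi / real K" "real j * pi / real K \<le> pi / 2" using angle_le[OF assms] by auto
  then show ?thesis unfolding eta_def using pi_gt_zero by (intro cos_ge_zero) linarith+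
qed

lemma eta_pos: assumes "2 * j < K" shows "eta K j > 0"
proof -
  have "0 \<le> real j * pi / real K" "real j * pi / real K < pi / 2" using angle_lt[OF assms] by auto
  then show ?thesis unfolding eta_def using pi_gt_zero by (intro cos_gt_zero_pi) linarith+
qed

lemma eta_dec:
  assumes "i < j" "2 * j \<le> K"
  shows "eta K j < eta K i"
proof -
  have K: "K > 0" using assms by simp
  have "real i * pi / real K < real j * pi / real K"
    using assms K by (intro divide_strict_right_mono mult_strict_right_mono) auto
  moreover have "real j * pi / real K \<le> pi" using angle_le(1)[OF assms(2)] pi_gt_zero by linarith
  ultimately show ?thesis unfolding eta_def
    by (intro cos_monotone_0_pi) auto
qed

lemma eta_bound: "\<bar>eta K j\<bar> \<le> 1"
  by (simp add: eta_def)

lemma cheb_eta: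
  assumes "2 * j \<le> K"
  shows "poly (cheb K) (eta K j) = (-1) ^ j"
proof (cases "K = 0")
  case True
  then show ?thesis using assms by simp
next
  case False
  have "poly (cheb K) (eta K j) = cos (real K * (real j * pi / real K))"
    by (simp add: eta_def cheb_cos)
  also have "real K * (real j * pi / real K) = real j * pi" using False by simp
  finally show ?thesis by simp
qed

lemma nodes_eta: "nodes (K div 2) (\<lambda>j. eta K j ^ 2)"
proof
  fix i j assume "i < j" "j \<le> K div 2"
  then have "eta K j < eta K i" "eta K j \<ge> 0" using eta_dec[of i j K] eta_nonneg[of j K] by auto
  then show "eta K j ^ 2 < eta K i ^ 2" by (intro power_strict_mono) auto
qed simp

definition Rp :: "nat \<Rightarrow> real poly" where
  "Rp K = (\<Sum>i\<le>K div 2. monom (cheb_coeff K (2 * i + K mod 2)) i)"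

lemma degree_Rp: "degree (Rp K) \<le> K div 2"
  unfolding Rp_def by (intro degree_sum_le) (auto intro: order.trans[OF degree_monom_le])

lemma coeff_Rp: "e \<le> K div 2 \<Longrightarrow> coeff (Rp K) e = cheb_coeff K (2 * e + K mod 2)"
  unfolding Rp_def by (simp add: coeff_sum)

lemma poly_Rp: "poly (Rp K) (t ^ 2) * t ^ (K mod 2) = poly (cheb K) t"
proof -
  define f where "f m = cheb_coeff K m * t ^ m" for m
  have "poly (Rp K) (t ^ 2) * t ^ (K mod 2) = (\<Sum>i\<le>K div 2. f (2 * i + K mod 2))"
    unfolding Rp_def f_def by (simp add: poly_sum poly_monom sum_distrib_right power_add power_mult mult.assoc)
  also have "\<dots> = sum f ((\<lambda>i. 2 * i + K mod 2) ` {..K div 2})"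
    by (subst sum.reindex) (auto simp: inj_on_def)
  also have "\<dots> = sum f {..K}"
  proof (rule sum.mono_neutral_left)
    show "(\<lambda>i. 2 * i + K mod 2) ` {..K div 2} \<subseteq> {..K}" by auto presburger
    show "\<forall>m\<in>{..K} - (\<lambda>i. 2 * i + K mod 2) ` {..K div 2}. f m = 0"
    proof
      fix m assume m: "m \<in> {..K} - (\<lambda>i. 2 * i + K mod 2) ` {..K div 2}"
      have "odd (K + m)"
      proof (rule ccontr)
        assume "\<not> odd (K + m)"
        have mK: "m \<le> K" using m by auto
        then have "m div 2 \<le> K div 2" by (simp add: div_le_mono)
        moreover have "m = 2 * (m div 2) + K mod 2" using \<open>\<not> odd (K + m)\<close> by presburger
        ultimately have "m \<in> (\<lambda>i. 2 * i + K mod 2) ` {..K div 2}" by (intro image_eqI) auto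
        then show False using m by blast
      qed
      then show "f m = 0" by (simp add: f_def cheb_coeff_def cheb_coeff_parity)
    qed
  qed simp
  also have "\<dots> = poly (cheb K) t" by (simp add: f_def poly_cheb_sum)
  finally show ?thesis .
qed


lemma markov_core:
  assumes dK: "d \<le> K" and ev: "even (K - d)"
  shows "\<exists>a::nat\<Rightarrow>real. (\<Sum>j\<le>K div 2. \<bar>a j\<bar>) \<le> \<bar>cheb_coeff K d\<bar> \<and>
    (\<forall>l. l \<le> K \<longrightarrow> even (l + d) \<longrightarrow> (\<Sum>j\<le>K div 2. a j * eta K j ^ l) = (if l = d then 1 else 0))"
proof -
  define M where "M = K div 2"
  define ep where "ep = K mod 2"
  define u where "u j = eta K j ^ 2" for j
  define e where "e = d div 2"
  interpret nodes M u using nodes_eta[of K] by (simp add: M_def u_def[abs_def])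
  define a where "a j = coeff (LL M u j) e / eta K j ^ ep" for j
  have d_eq: "d = 2 * e + ep" unfolding e_def ep_def using dK ev by presburger
  have eM: "e \<le> M" unfolding e_def M_def using dK by (simp add: div_le_mono)
  have epos: "eta K j ^ ep > 0" if "j \<le> M" for j
  proof (cases "ep = 0")
    case True then show ?thesis by simp
  next
    case False
    then have "ep = 1" "2 * j < K" using that unfolding ep_def M_def by presburger+
    then show ?thesis using eta_pos[of j K] by simp
  qed
  have two_j: "2 * j \<le> K" if "j \<le> M" for j using that unfolding M_def by simp
  have polyR: "poly (Rp K) (u j) = (-1) ^ j / eta K j ^ ep" if "j \<le> M" for j
  proof -
    have "poly (Rp K) (u j) * eta K j ^ ep = (-1) ^ j"
      using poly_Rp[of K "eta K j"] cheb_eta[OF two_j[OF that]] by (simp add: u_def ep_def)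
    moreover have "eta K j ^ ep \<noteq> 0" using epos[OF that] by linarith
    ultimately show ?thesis by (metis nonzero_mult_div_cancel_right)
  qed
  have "coeff (Rp K) e = (\<Sum>j\<le>M. poly (Rp K) (u j) * coeff (LL M u j) e)"
    by (rule interp_coeff) (simp add: degree_Rp M_def)
  also have "\<dots> = (\<Sum>j\<le>M. (-1) ^ j * a j)"
    by (rule sum.cong) (simp_all add: polyR a_def)
  finally have C1: "(\<Sum>j\<le>M. (-1) ^ j * a j) = cheb_coeff K d"
    using coeff_Rp[of e K] eM d_eq by (simp add: M_def ep_def)
  define \<sigma> where "\<sigma> = ((-1::real) ^ (M - e))"
  have sabs: "\<bar>\<sigma>\<bar> = 1" by (simp add: \<sigma>_def)
  have absa: "\<bar>a j\<bar> = \<sigma> * ((-1) ^ j * a j)" if "j \<le> M" for j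
  proof -
    have "0 \<le> \<sigma> * ((-1) ^ j * coeff (LL M u j) e)" using LL_sign[OF that] by (simp add: \<sigma>_def)
    then have nn: "0 \<le> \<sigma> * ((-1) ^ j * a j)"
      using epos[OF that] by (simp add: a_def)
    have "\<bar>\<sigma> * ((-1) ^ j * a j)\<bar> = \<bar>a j\<bar>" using sabs by (simp add: abs_mult)
    then show ?thesis using nn by simp
  qed
  have "(\<Sum>j\<le>M. \<bar>a j\<bar>) = \<sigma> * (\<Sum>j\<le>M. (-1) ^ j * a j)"
    by (simp add: absa sum_distrib_left)
  also have "\<dots> = \<sigma> * cheb_coeff K d" by (simp add: C1)
  also have "\<dots> \<le> \<bar>cheb_coeff K d\<bar>"
    using sabs by (metis abs_ge_self abs_mult mult_1)
  finally have C2: "(\<Sum>j\<le>M. \<bar>a j\<bar>) \<le> \<bar>cheb_coeff K d\<bar>" .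
  have C3: "(\<Sum>j\<le>M. a j * eta K j ^ l) = (if l = d then 1 else 0)" if l: "l \<le> K" "even (l + d)" for l
  proof -
    define p where "p = l div 2"
    have l_eq: "l = 2 * p + ep" unfolding p_def ep_def using l dK ev by presburger
    have pM: "p \<le> M" unfolding p_def M_def using l by (simp add: div_le_mono)
    have "(\<Sum>j\<le>M. a j * eta K j ^ l) = (\<Sum>j\<le>M. poly (monom 1 p) (u j) * coeff (LL M u j) e)"
    proof (rule sum.cong)
      fix j assume "j \<in> {..M}"
      then have "eta K j ^ ep > 0" using epos by simp
      then have "eta K j ^ ep \<noteq> 0" by linarith
      then show "a j * eta K j ^ l = poly (monom 1 p) (u j) * coeff (LL M u j) e"
        by (simp add: a_def l_eq u_def poly_monom power_add power_mult) blast
    qed simp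
    also have "\<dots> = coeff (monom 1 p) e"
      by (rule interp_coeff[symmetric]) (simp add: pM degree_monom_le order.trans[OF degree_monom_le])
    also have "\<dots> = (if l = d then 1 else 0)" using l_eq d_eq by auto
    finally show ?thesis .
  qed
  show ?thesis using C2 C3 unfolding M_def by blast
qed

lemma sum_bool_prod:
  "(\<Sum>z\<in>(UNIV::bool set) \<times> A. F z) = (\<Sum>j\<in>A. F (True, j) + F (False, j))"
proof -
  have "(\<Sum>z\<in>(UNIV::bool set) \<times> A. F z) = (\<Sum>b\<in>UNIV. \<Sum>j\<in>A. F (b, j))"
    by (simp add: sum.cartesian_product)
  also have "\<dots> = (\<Sum>j\<in>A. F (True, j) + F (False, j))"
    by (simp add: UNIV_bool sum.distrib add_ac)
  finally show ?thesis .
qed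

lemma markov_measure:
  assumes "d \<le> k"
  shows "\<exists>(I::(bool \<times> nat) set) t \<mu>. finite I \<and> (\<forall>z\<in>I. \<bar>t z\<bar> \<le> (1::real)) \<and>
    (\<forall>l\<le>k. (\<Sum>z\<in>I. \<mu> z * t z ^ l) = (if l = d then 1 else (0::real))) \<and>
    (\<Sum>z\<in>I. \<bar>\<mu> z\<bar>) \<le> \<bar>cheb_coeff_tilde k d\<bar>"
proof -
  define K where "K = (if even (k - d) then k else k - 1)"
  have dK: "d \<le> K" and ev: "even (K - d)" using assms unfolding K_def by presburger+
  have ct: "cheb_coeff_tilde k d = cheb_coeff K d" by (simp add: K_def cheb_coeff_tilde_def)
  obtain a where a1: "(\<Sum>j\<le>K div 2. \<bar>a j\<bar>) \<le> \<bar>cheb_coeff K d\<bar>"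
    and a2: "\<And>l. l \<le> K \<Longrightarrow> even (l + d) \<Longrightarrow> (\<Sum>j\<le>K div 2. a j * eta K j ^ l) = (if l = d then 1 else 0)"
    using markov_core[OF dK ev] by blast
  define I where "I = (UNIV::bool set) \<times> {..K div 2}"
  define t where "t z = (if fst z then eta K (snd z) else - eta K (snd z))" for z
  define \<mu> where "\<mu> z = (if fst z then 1 else (-1) ^ d) * a (snd z) / 2" for z
  have "finite I" by (simp add: I_def)
  moreover have "\<forall>z\<in>I. \<bar>t z\<bar> \<le> 1" by (simp add: t_def eta_bound)
  moreover have "\<forall>l\<le>k. (\<Sum>z\<in>I. \<mu> z * t z ^ l) = (if l = d then 1 else 0)"
  proof (intro allI impI)
    fix l assume lk: "l \<le> k"
    have "(\<Sum>z\<in>I. \<mu> z * t z ^ l) = (\<Sum>j\<le>K div 2. a j * eta K j ^ l * ((1 + (-1) ^ (d + l)) / 2))"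
      unfolding I_def sum_bool_prod
      by (rule sum.cong) (simp_all add: \<mu>_def t_def power_minus' power_add field_simps)
    also have "\<dots> = (if l = d then 1 else 0)"
    proof (cases "even (l + d)")
      case True
      then have "l \<le> K" using lk assms unfolding K_def by presburger
      then show ?thesis using True a2[of l] by (simp add: sum_distrib_right[symmetric] add.commute)
    next
      case False
      then have "l \<noteq> d" by auto
      then show ?thesis using False by (simp add: add.commute)
    qed
    finally show "(\<Sum>z\<in>I. \<mu> z * t z ^ l) = (if l = d then 1 else 0)" .
  qed
  moreover have "(\<Sum>z\<in>I. \<bar>\<mu> z\<bar>) \<le> \<bar>cheb_coeff_tilde k d\<bar>"
  proof -
    have "(\<Sum>z\<in>I. \<bar>\<mu> z\<bar>) = (\<Sum>j\<le>K div 2. \<bar>a j\<bar>)"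
      unfolding I_def sum_bool_prod by (rule sum.cong) (simp_all add: \<mu>_def abs_mult)
    then show ?thesis using a1 ct by simp
  qed
  ultimately show ?thesis by blast
qed


lemma L1_nonneg: "L1_cube n h \<ge> 0"
  unfolding L1_cube_def by (simp add: sum_nonneg)

lemma zero_high_deg: "(\<lambda>_. 0) \<in> high_deg n k"
  unfolding high_deg_def by (intro CollectI exI[of _ "\<lambda>_. 0"]) simp

lemma prod_expand:
  "(\<Prod>i\<in>{0..<n}. 1 + t * x i) = (\<Sum>S\<in>Pow {0..<n}. t ^ card S * walsh S x)"
proof -
  have "(\<Prod>i\<in>{0..<n}. t * x i + 1) = (\<Sum>S\<in>Pow {0..<n}. (\<Prod>i\<in>S. t * x i) * (\<Prod>i\<in>{0..<n}-S. 1))"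
    by (rule prod_add) simp
  also have "\<dots> = (\<Sum>S\<in>Pow {0..<n}. t ^ card S * walsh S x)"
    by (simp add: walsh_def prod.distrib)
  finally show ?thesis by (simp add: add.commute)
qed

lemma elem_sym_Pow: "elem_sym n d x = (\<Sum>S\<in>Pow {0..<n}. if card S = d then walsh S x else 0)"
proof -
  have "(\<Sum>S\<in>Pow {0..<n}. if card S = d then walsh S x else 0) = (\<Sum>S\<in>Pow {0..<n} \<inter> {S. card S = d}. walsh S x)"
    by (simp add: sum.inter_restrict)
  also have "Pow {0..<n} \<inter> {S. card S = d} = {S. S \<subseteq> {0..<n} \<and> card S = d}" by auto
  finally show ?thesis by (simp add: elem_sym_def)
qed

lemma upper:
  assumes "d \<le> k"
  shows "\<exists>g\<in>high_deg n k. L1_cube n (\<lambda>x. elem_sym n d x - g x) \<le> \<bar>cheb_coeff_tilde k d\<bar>"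
proof -
  obtain I :: "(bool \<times> nat) set" and t \<mu> where I: "finite I" and tb: "\<forall>z\<in>I. \<bar>t z\<bar> \<le> (1::real)"
    and mom: "\<forall>l\<le>k. (\<Sum>z\<in>I. \<mu> z * t z ^ l) = (if l = d then 1 else (0::real))"
    and tot: "(\<Sum>z\<in>I. \<bar>\<mu> z\<bar>) \<le> \<bar>cheb_coeff_tilde k d\<bar>"
    using markov_measure[OF assms] by blast
  define m where "m l = (\<Sum>z\<in>I. \<mu> z * t z ^ l)" for l
  define c where "c S = (if card S \<le> k then 0 else - m (card S))" for S :: "nat set"
  define g where "g x = (\<Sum>S\<in>Pow {0..<n}. c S * walsh S x)" for x :: "nat \<Rightarrow> real"
  have g: "g \<in> high_deg n k" unfolding high_deg_def g_def
    by (intro CollectI exI[of _ c] conjI) (simp_all add: c_def)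
  have diff: "elem_sym n d x - g x = (\<Sum>z\<in>I. \<mu> z * (\<Prod>i\<in>{0..<n}. 1 + t z * x i))" for x
  proof -
    have "elem_sym n d x - g x = (\<Sum>S\<in>Pow {0..<n}. (if card S = d then walsh S x else 0) - c S * walsh S x)"
      by (simp add: elem_sym_Pow g_def sum_subtractf)
    also have "\<dots> = (\<Sum>S\<in>Pow {0..<n}. ((if card S = d then 1 else 0) - c S) * walsh S x)"
      by (rule sum.cong) (auto simp: left_diff_distrib)
    also have "\<dots> = (\<Sum>S\<in>Pow {0..<n}. m (card S) * walsh S x)"
    proof (rule sum.cong)
      fix S
      show "((if card S = d then 1 else 0) - c S) * walsh S x = m (card S) * walsh S x"
      proof (cases "card S \<le> k")
        case True then show ?thesis using mom by (simp add: c_def m_def)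
      next
        case False then show ?thesis using assms by (simp add: c_def)
      qed
    qed simp
    also have "\<dots> = (\<Sum>z\<in>I. \<mu> z * (\<Sum>S\<in>Pow {0..<n}. t z ^ card S * walsh S x))"
      by (simp add: m_def sum_distrib_left sum_distrib_right sum.swap[of _ I] mult.assoc)
    finally show ?thesis by (simp add: prod_expand)
  qed
  have pos: "(\<Prod>i\<in>{0..<n}. 1 + t z * x i) \<ge> 0" if "z \<in> I" "x \<in> cube n" for z x
  proof (rule prod_nonneg)
    fix i assume "i \<in> {0..<n}"
    then have "x i = -1 \<or> x i = 1" using cube_val[OF that(2)] by auto
    then show "0 \<le> 1 + t z * x i" using tb that(1) by (auto simp: abs_le_iff)
  qed
  have "(\<Sum>x\<in>cube n. \<bar>elem_sym n d x - g x\<bar>) \<le> (\<Sum>x\<in>cube n. \<Sum>z\<in>I. \<bar>\<mu> z\<bar> * (\<Prod>i\<in>{0..<n}. 1 + t z * x i))"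
  proof (rule sum_mono)
    fix x assume x: "x \<in> cube n"
    have "\<bar>elem_sym n d x - g x\<bar> \<le> (\<Sum>z\<in>I. \<bar>\<mu> z * (\<Prod>i\<in>{0..<n}. 1 + t z * x i)\<bar>)"
      unfolding diff by (rule sum_abs)
    also have "\<dots> = (\<Sum>z\<in>I. \<bar>\<mu> z\<bar> * (\<Prod>i\<in>{0..<n}. 1 + t z * x i))"
      by (rule sum.cong) (auto simp: abs_mult pos[OF _ x])
    finally show "\<bar>elem_sym n d x - g x\<bar> \<le> \<dots>" .
  qed
  also have "\<dots> = (\<Sum>z\<in>I. \<bar>\<mu> z\<bar> * (\<Sum>x\<in>cube n. \<Prod>i<n. 1 + t z * x i))"
    by (simp add: sum.swap[of _ "cube n"] sum_distrib_left atLeast0LessThan)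
  also have "\<dots> = (\<Sum>z\<in>I. \<bar>\<mu> z\<bar>) * 2 ^ n"
  proof -
    have "(\<Sum>x\<in>cube n. \<Prod>i<n. 1 + t z * x i) = 2 ^ n" for z
      using sum_cube_prod[where n=n and f="\<lambda>i a. 1 + t z * a"] by simp
    then show ?thesis by (simp add: sum_distrib_right)
  qed
  finally have "L1_cube n (\<lambda>x. elem_sym n d x - g x) \<le> (\<Sum>z\<in>I. \<bar>\<mu> z\<bar>)"
    unfolding L1_cube_def by (simp add: divide_le_eq)
  then show ?thesis using g tot by force
qed


lemma ybar_bound:
  assumes "x \<in> cube n"
  shows "\<bar>ybar n x\<bar> \<le> 1"
proof (cases "n = 0")
  case True then show ?thesis by (simp add: ybar_def)
next
  case False
  have "\<bar>\<Sum>i<n. x i\<bar> \<le> (\<Sum>i<n. \<bar>x i\<bar>)" by (rule sum_abs)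
  also have "\<dots> = (\<Sum>i<n. 1)"
  proof (rule sum.cong)
    fix i assume "i \<in> {..<n}"
    then have "x i = -1 \<or> x i = 1" using cube_val[OF assms] by auto
    then show "\<bar>x i\<bar> = 1" by auto
  qed simp
  finally have "\<bar>\<Sum>i<n. x i\<bar> \<le> real n" by simp
  have "\<bar>ybar n x\<bar> = \<bar>\<Sum>i<n. x i\<bar> / real n" by (simp add: ybar_def abs_divide)
  also have "\<dots> \<le> real n / real n" by (rule divide_right_mono) (use \<open>\<bar>\<Sum>i<n. x i\<bar> \<le> real n\<close> in simp_all)
  also have "\<dots> = 1" using False by simp
  finally show ?thesis .
qed

theorem corollary1p5:
  fixes k d :: nat
  assumes "d \<le> k"
  shows "\<exists>\<epsilon> :: nat \<Rightarrow> real.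
    (\<forall>n\<ge>k. \<epsilon> n > 0 \<and>
       \<bar>cheb_coeff_tilde k d\<bar> - \<epsilon> n
         \<le> (INF g\<in>high_deg n k. L1_cube n (\<lambda>x. elem_sym n d x - g x)) \<and>
       (INF g\<in>high_deg n k. L1_cube n (\<lambda>x. elem_sym n d x - g x)) \<le> \<bar>cheb_coeff_tilde k d\<bar>)
    \<and> \<epsilon> \<longlonglongrightarrow> 0"
proof -
  define c where "c = \<bar>cheb_coeff_tilde k d\<bar>"
  define K where "K = (if even (k - d) then k else k - 1)"
  have dK: "d \<le> K" and Kk: "K \<le> k" using assms unfolding K_def by presburger+
  have ct: "cheb_coeff_tilde k d = cheb_coeff K d" by (simp add: K_def cheb_coeff_tilde_def)
  define \<sigma> where "\<sigma> = (if cheb_coeff K d \<ge> 0 then 1 else -1 :: real)"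
  have sc: "\<sigma> * cheb_coeff K d = c" by (simp add: \<sigma>_def c_def ct)
  define Inf_n where "Inf_n n = (INF g\<in>high_deg n k. L1_cube n (\<lambda>x. elem_sym n d x - g x))" for n
  define L where "L n = (if n = 0 then 0 else \<sigma> * (\<Sum>m\<le>K. cheb_coeff K m * Rm n m d))" for n
  have ne: "high_deg n k \<noteq> {}" for n using zero_high_deg by blast
  have low: "L n \<le> Inf_n n" for n
  proof (cases "n = 0")
    case True
    then show ?thesis unfolding Inf_n_def L_def
      by (intro cINF_greatest ne) (simp add: L1_nonneg)
  next
    case False
    then have n0: "n > 0" by simp
    define h where "h x = \<sigma> * (\<Sum>m\<in>{..K}. cheb_coeff K m * ybar n x ^ m)" for x
    have h_poly: "h x = \<sigma> * poly (cheb K) (ybar n x)" for x by (simp add: h_def poly_cheb_sum)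
    have orth_h: "orth n k h"
      unfolding h_def
      by (intro orth_cmult orth_sum) (auto intro: orth_mono[OF orth_ypow] order.trans[OF _ Kk])
    have hb: "\<forall>x\<in>cube n. \<bar>h x\<bar> \<le> 1"
    proof
      fix x assume "x \<in> cube n"
      then have "\<bar>poly (cheb K) (ybar n x)\<bar> \<le> 1" using ybar_bound cheb_bound by blast
      then show "\<bar>h x\<bar> \<le> 1" by (simp add: h_poly \<sigma>_def abs_mult)
    qed
    have "(\<Sum>x\<in>cube n. elem_sym n d x * h x) = \<sigma> * (\<Sum>m\<le>K. cheb_coeff K m * (\<Sum>x\<in>cube n. elem_sym n d x * ybar n x ^ m))"
      by (simp add: h_def sum_distrib_left sum.swap[of _ "cube n"] mult.left_commute)
    also have "\<dots> = 2 ^ n * (\<sigma> * (\<Sum>m\<le>K. cheb_coeff K m * Rm n m d))"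
      by (simp add: moments[OF n0] sum_distrib_left mult.left_commute)
    finally have val: "(\<Sum>x\<in>cube n. elem_sym n d x * h x) / 2 ^ n = L n"
      using False by (simp add: L_def)
    show ?thesis unfolding Inf_n_def
    proof (rule cINF_greatest[OF ne])
      fix g assume "g \<in> high_deg n k"
      from weak_dual[OF this orth_h hb, of d] val
      show "L n \<le> L1_cube n (\<lambda>x. elem_sym n d x - g x)" by simp
    qed
  qed
  have up: "Inf_n n \<le> c" for n
  proof -
    obtain g where g: "g \<in> high_deg n k" "L1_cube n (\<lambda>x. elem_sym n d x - g x) \<le> c"
      using upper[OF assms, of n] c_def by blast
    have "Inf_n n \<le> L1_cube n (\<lambda>x. elem_sym n d x - g x)"
      unfolding Inf_n_def
      by (rule cINF_lower[OF _ g(1)]) (auto intro: bdd_belowI[where m=0] simp: L1_nonneg)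
    then show ?thesis using g(2) by simp
  qed
  have Llim: "L \<longlonglongrightarrow> c"
  proof -
    have "(\<lambda>n. \<sigma> * (\<Sum>m\<le>K. cheb_coeff K m * Rm n m d)) \<longlonglongrightarrow> \<sigma> * (\<Sum>m\<le>K. cheb_coeff K m * (if m = d then 1 else 0))"
      by (intro tendsto_mult tendsto_const tendsto_sum Rm_lim)
    also have "\<sigma> * (\<Sum>m\<le>K. cheb_coeff K m * (if m = d then 1 else 0)) = c"
      using dK sc by (simp add: if_distrib cong: if_cong)
    finally have lim: "(\<lambda>n. \<sigma> * (\<Sum>m\<le>K. cheb_coeff K m * Rm n m d)) \<longlonglongrightarrow> c" .
    have "eventually (\<lambda>n. \<sigma> * (\<Sum>m\<le>K. cheb_coeff K m * Rm n m d) = L n) sequentially"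
      using eventually_ge_at_top[of 1] by eventually_elim (simp add: L_def)
    then show ?thesis using lim tendsto_cong by fastforce
  qed
  define \<epsilon> where "\<epsilon> n = max (c - L n) 0 + inverse (real (Suc n))" for n
  have "\<epsilon> \<longlonglongrightarrow> max (c - c) 0 + 0"
    unfolding \<epsilon>_def by (intro tendsto_add tendsto_max tendsto_diff tendsto_const Llim LIMSEQ_inverse_real_of_nat)
  then have lim0: "\<epsilon> \<longlonglongrightarrow> 0" by simp
  have "\<forall>n\<ge>k. \<epsilon> n > 0 \<and> c - \<epsilon> n \<le> Inf_n n \<and> Inf_n n \<le> c"
  proof (intro allI impI conjI)
    fix n
    show "\<epsilon> n > 0" unfolding \<epsilon>_def by (simp add: add_nonneg_pos)
    have "inverse (real (Suc n)) > 0" by simp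
    moreover have "max (c - L n) 0 \<ge> c - L n" by simp
    ultimately have "c - \<epsilon> n \<le> L n" unfolding \<epsilon>_def by linarith
    then show "c - \<epsilon> n \<le> Inf_n n" using low[of n] by linarith
    show "Inf_n n \<le> c" by (rule up)
  qed
  then show ?thesis using lim0 unfolding Inf_n_def c_def by blast
qed


end
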